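(* Let $L\in\mathcal{C}^2(\mathbb{R}^n\times\mathbb{R}^n,\mathbb{R})$, $\mathbf{g}\in\mathcal{C}^1(\mathbb{R}^n,\mathbb{R}^m)$ with Jacobian $\nabla\mathbf{g}(\mathbf{q})\in\mathbb{R}^{m\times n}$, and $\tilde{\mathbf{B}}:\mathbb{R}^n\times\mathbb{R}^n\to\mathbb{R}^{n\times p}$. Consider the Lagrange equations of the first kind $$\dot{\mathbf{q}}=\mathbf{v},\qquad \frac{\mathrm{d}}{\mathrm{d}t}\big(\partial_{\mathbf{v}}L(\mathbf{q},\mathbf{v})\big)=\partial_{\mathbf{q}}L(\mathbf{q},\mathbf{v})-\nabla\mathbf{g}(\mathbf{q})^\top\boldsymbol{\lambda}+\tilde{\mathbf{B}}(\mathbf{q},\mathbf{v})\mathbf{u},\qquad \mathbf{0}=\nabla\mathbf{g}(\mathbf{q})\mathbf{v},$$ with $\mathbf{q},\mathbf{v}\in\mathbb{R}^n$, $\boldsymbol{\lambda}\in\mathbb{R}^m$, $\mathbf{u}\in\mathbb{R}^p$. Set $\mathbf{x}=(\mathbf{q},\mathbf{v},\boldsymbol{\lambda})$, $$\mathbf{E}(\mathbf{x})=\begin{bmatrix}\mathbf{I}&\mathbf{0}&\mathbf{0}\\ \mathbf{0}&\partial^2_{\mathbf{v}\mathbf{v}}L&\mathbf{0}\\ \mathbf{0}&\mathbf{0}&\mathbf{0}\end{bmatrix},\quad \mathbf{J}(\mathbf{x})=\begin{bmatrix}\mathbf{0}&\mathbf{I}&\mathbf{0}\\ -\mathbf{I}&\partial^2_{\mathbf{q}\mathbf{v}}L-(\partial^2_{\mathbf{q}\mathbf{v}}L)^\top&-\nabla\mathbf{g}^\top\\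 \mathbf{0}&\nabla\mathbf{g}&\mathbf{0}\end{bmatrix},\quad \mathbf{z}(\mathbf{x})=\begin{bmatrix}-\partial_{\mathbf{q}}L+(\partial^2_{\mathbf{q}\mathbf{v}}L)\mathbf{v}\\ \mathbf{v}\\ \boldsymbol{\lambda}\end{bmatrix},\quad \mathbf{B}(\mathbf{x})=\begin{bmatrix}\mathbf{0}\\ \tilde{\mathbf{B}}(\mathbf{q},\mathbf{v})\\ \mathbf{0}\end{bmatrix},$$ and $H(\mathbf{q},\mathbf{v},\boldsymbol{\lambda})=\partial_{\mathbf{v}}L(\mathbf{q},\mathbf{v})^\top\mathbf{v}-L(\mathbf{q},\mathbf{v})$. Then (a) a differentiable trajectory $(\mathbf{q},\mathbf{v},\boldsymbol{\lambda})$ solves the Lagrange equations above if and only if it solves $\mathbf{E}(\mathbf{x})\dot{\mathbf{x}}=\mathbf{J}(\mathbf{x})\mathbf{z}(\mathbf{x})+\mathbf{B}(\mathbf{x})\mathbf{u}$; (b) $\mathbf{E}$ is symmetric, $\mathbf{J}$ is skew-symmetric, and $\mathbf{E}(\mathbf{x})^\top\mathbf{z}(\mathbf{x})=\nabla H(\mathbf{x})$ for all $\mathbf{x}$; hence the system is a port-Hamiltonian descriptor system with output $\mathbf{y}=\mathbf{B}^\top\mathbf{z}=\tilde{\mathbf{B}}^\top\mathbf{v}$, and along every solution $\frac{\mathrm{d}}{\mathrm{d}t}H=\mathbf{u}^\top\tilde{\mathbf{B}}^\top\mathbf{v}$.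
   Context: Gradients and partial derivatives $\partial_{\mathbf{q}}f$ are column vectors. Second derivatives are defined by $\partial^2_{\mathbf{q}\mathbf{v}}f:=\frac{\partial}{\partial\mathbf{v}}\big(\frac{\partial f}{\partial\mathbf{q}}\big)$, i.e. the matrix with $(i,j)$ entry $\partial^2 f/\partial q_i\partial v_j$; similarly $\partial^2_{\mathbf{v}\mathbf{v}}L$ has entries $\partial^2L/\partial v_i\partial v_j$. A port-Hamiltonian descriptor system is a system $\mathbf{E}(\mathbf{x})\dot{\mathbf{x}}=\mathbf{J}(\mathbf{x})\mathbf{z}(\mathbf{x})+\mathbf{B}(\mathbf{x})\mathbf{u}$, $\mathbf{y}=\mathbf{B}(\mathbf{x})^\top\mathbf{z}$, with $\mathbf{E}$ symmetric (possibly singular), $\mathbf{J}$ skew-symmetric, and a Hamiltonian $H$ satisfying $\mathbf{E}(\mathbf{x})^\top\mathbf{z}(\mathbf{x})=\nabla H(\mathbf{x})$. *)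

theory Defs
  imports "HOL-Analysis.Analysis"
begin

definition C1 :: "('a::real_normed_vector \<Rightarrow> 'b::real_normed_vector) \<Rightarrow> bool" where
  "C1 f \<longleftrightarrow> (\<exists>f'. (\<forall>x. (f has_derivative blinfun_apply (f' x)) (at x)) \<and> continuous_on UNIV f')"

definition C2 :: "('a::real_normed_vector \<Rightarrow> 'b::real_normed_vector) \<Rightarrow> bool" where
  "C2 f \<longleftrightarrow> (\<exists>f'. (\<forall>x. (f has_derivative blinfun_apply (f' x)) (at x)) \<and> C1 f')"

definition pq :: "(real^'n \<Rightarrow> real^'n \<Rightarrow> real) \<Rightarrow> real^'n \<Rightarrow> real^'n \<Rightarrow> real^'n" where
  "pq L q v = (\<chi> i. deriv (\<lambda>t. L (q + t *\<^sub>R axis i 1) v) 0)"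

definition pv :: "(real^'n \<Rightarrow> real^'n \<Rightarrow> real) \<Rightarrow> real^'n \<Rightarrow> real^'n \<Rightarrow> real^'n" where
  "pv L q v = (\<chi> i. deriv (\<lambda>t. L q (v + t *\<^sub>R axis i 1)) 0)"

definition d2vv :: "(real^'n \<Rightarrow> real^'n \<Rightarrow> real) \<Rightarrow> real^'n \<Rightarrow> real^'n \<Rightarrow> real^'n^'n" where
  "d2vv L q v = (\<chi> i j. deriv (\<lambda>t. pv L q (v + t *\<^sub>R axis j 1) $ i) 0)"

definition d2qv :: "(real^'n \<Rightarrow> real^'n \<Rightarrow> real) \<Rightarrow> real^'n \<Rightarrow> real^'n \<Rightarrow> real^'n^'n" where
  "d2qv L q v = (\<chi> i j. deriv (\<lambda>t. pq L q (v + t *\<^sub>R axis j 1) $ i) 0)"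

definition jac :: "(real^'n \<Rightarrow> real^'m) \<Rightarrow> real^'n \<Rightarrow> real^'n^'m" where
  "jac g q = matrix (frechet_derivative g (at q))"

text \<open>State x = (q, v, lambda) as a vector indexed by 'n + ('n + 'm).\<close>
definition xvec :: "real^'n \<Rightarrow> real^'n \<Rightarrow> real^'m \<Rightarrow> real^('n::finite + ('n + 'm::finite))" where
  "xvec q v lam = (\<chi> i. case i of Inl a \<Rightarrow> q $ a | Inr (Inl a) \<Rightarrow> v $ a | Inr (Inr a) \<Rightarrow> lam $ a)"

definition xq :: "real^('n::finite + ('n + 'm::finite)) \<Rightarrow> real^'n" where "xq x = (\<chi> a. x $ Inl a)"
definition xv :: "real^('n::finite + ('n + 'm::finite)) \<Rightarrow> real^'n" where "xv x = (\<chi> a. x $ Inr (Inl a))"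
definition xl :: "real^('n::finite + ('n + 'm::finite)) \<Rightarrow> real^'m" where "xl x = (\<chi> a. x $ Inr (Inr a))"

definition Emat :: "(real^'n \<Rightarrow> real^'n \<Rightarrow> real) \<Rightarrow> real^('n::finite + ('n + 'm::finite)) \<Rightarrow> real^('n + ('n + 'm))^('n + ('n + 'm))" where
  "Emat L x = (\<chi> i j. case (i, j) of
      (Inl a, Inl b) \<Rightarrow> (if a = b then 1 else 0)
    | (Inr (Inl a), Inr (Inl b)) \<Rightarrow> d2vv L (xq x) (xv x) $ a $ b
    | _ \<Rightarrow> 0)"

definition Jmat :: "(real^'n \<Rightarrow> real^'n \<Rightarrow> real) \<Rightarrow> (real^'n \<Rightarrow> real^'m) \<Rightarrow> real^('n::finite + ('n + 'm::finite)) \<Rightarrow> real^('n + ('n + 'm))^('n + ('n + 'm))" where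
  "Jmat L g x = (let S = d2qv L (xq x) (xv x); G = jac g (xq x) in
    (\<chi> i j. case (i, j) of
      (Inl a, Inr (Inl b)) \<Rightarrow> (if a = b then 1 else 0)
    | (Inr (Inl a), Inl b) \<Rightarrow> - (if a = b then 1 else 0)
    | (Inr (Inl a), Inr (Inl b)) \<Rightarrow> (S - transpose S) $ a $ b
    | (Inr (Inl a), Inr (Inr b)) \<Rightarrow> - (transpose G) $ a $ b
    | (Inr (Inr a), Inr (Inl b)) \<Rightarrow> G $ a $ b
    | _ \<Rightarrow> 0))"

definition zvec :: "(real^'n \<Rightarrow> real^'n \<Rightarrow> real) \<Rightarrow> real^('n::finite + ('n + 'm::finite)) \<Rightarrow> real^('n + ('n + 'm))" where
  "zvec L x = (let w = - pq L (xq x) (xv x) + d2qv L (xq x) (xv x) *v xv x in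
    (\<chi> i. case i of Inl a \<Rightarrow> w $ a | Inr (Inl a) \<Rightarrow> xv x $ a | Inr (Inr a) \<Rightarrow> xl x $ a))"

definition Bmat :: "(real^'n \<Rightarrow> real^'n \<Rightarrow> real^'p^'n) \<Rightarrow> real^('n::finite + ('n + 'm::finite)) \<Rightarrow> real^'p^('n + ('n + 'm))" where
  "Bmat Bt x = (\<chi> i k. case i of Inr (Inl a) \<Rightarrow> Bt (xq x) (xv x) $ a $ k | _ \<Rightarrow> 0)"

definition Ham :: "(real^'n \<Rightarrow> real^'n \<Rightarrow> real) \<Rightarrow> real^('n::finite + ('n + 'm::finite)) \<Rightarrow> real" where
  "Ham L x = pv L (xq x) (xv x) \<bullet> xv x - L (xq x) (xv x)"

end

theory Submission
  imports Defs
begin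

lemma schwarz_core:
  fixes f :: "'a::real_normed_vector \<Rightarrow> real" and f' :: "'a \<Rightarrow> 'a \<Rightarrow>\<^sub>L real"
    and f'' :: "'a \<Rightarrow> 'a \<Rightarrow>\<^sub>L ('a \<Rightarrow>\<^sub>L real)"
  assumes d1: "\<And>y. (f has_derivative blinfun_apply (f' y)) (at y)"
    and d2: "\<And>y. (f' has_derivative blinfun_apply (f'' y)) (at y)"
    and c: "isCont f'' x" and e: "e > 0"
  shows "\<exists>d>0. \<forall>a b. norm a + norm b < d \<longrightarrow>
     \<bar>f (x+a+b) - f (x+a) - f (x+b) + f x - f'' x b a\<bar> \<le> e * norm a * norm b"
proof -
  obtain d where d: "d > 0" and dd: "\<And>y. dist y x < d \<Longrightarrow> dist (f'' y) (f'' x) < e"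
    using c e unfolding continuous_at_eps_delta by blast
  have step1: "norm (f' (x+z+b) - f' (x+z) - f'' x b) \<le> norm b * e" if zb: "norm z + norm b < d" for z b
  proof -
    have "norm (f' (x+z+b) - f' (x+z) - blinfun_apply (f'' x) ((x+z+b) - (x+z))) \<le> norm ((x+z+b) - (x+z)) * e"
    proof (rule differentiable_bound_linearization[where S="ball x d" and f'="\<lambda>y. blinfun_apply (f'' y)"])
      fix t :: real assume t: "t \<in> {0..1}"
      have "norm (z + t *\<^sub>R b) \<le> norm z + norm b"
      proof -
        have "t * norm b \<le> norm b" using t by (simp add: mult_left_le_one_le)
        then show ?thesis using t norm_triangle_ineq[of z "t *\<^sub>R b"] by simp
      qed
      then show "x + z + t *\<^sub>R (x + z + b - (x + z)) \<in> ball x d"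
        using zb norm_minus_cancel[of "z + t *\<^sub>R b"] by (simp add: dist_norm add.assoc)
    next
      fix y assume "y \<in> ball x d"
      then show "(f' has_derivative blinfun_apply (f'' y)) (at y within ball x d)"
        using d2 has_derivative_at_withinI by blast
    next
      fix y assume "y \<in> ball x d"
      then have "dist (f'' y) (f'' x) < e" using dd by (metis mem_ball dist_commute)
      then show "onorm (blinfun_apply (f'' y) - blinfun_apply (f'' x)) \<le> e"
      proof -
        have "blinfun_apply (f'' y) - blinfun_apply (f'' x) = blinfun_apply (f'' y - f'' x)"
          by (simp add: fun_eq_iff blinfun.diff_left)
        then show ?thesis using \<open>dist (f'' y) (f'' x) < e\<close>
          by (simp add: dist_norm norm_blinfun.rep_eq)
      qed
    next
      show "x \<in> ball x d" using d by simp
    qed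
    then show ?thesis by simp
  qed
  show ?thesis
  proof (intro exI[of _ d] conjI allI impI d)
    fix a b :: 'a assume ab: "norm a + norm b < d"
    define \<psi> where "\<psi> z = f (x+z+b) - f (x+z) - f'' x b z" for z
    have der: "(\<psi> has_derivative blinfun_apply (f' (x+z+b) - f' (x+z) - f'' x b)) (at z within ball 0 (d - norm b))" for z
    proof -
      have h1: "((\<lambda>z. f (x+z+b)) has_derivative blinfun_apply (f' (x+z+b))) (at z)"
      proof -
        have l: "((\<lambda>z. x + z + b) has_derivative (\<lambda>h. h)) (at z)" by (intro derivative_eq_intros) auto
        show ?thesis using has_derivative_compose[OF l d1] by simp
      qed
      have h2: "((\<lambda>z. f (x+z)) has_derivative blinfun_apply (f' (x+z))) (at z)"
      proof -
        have l: "((\<lambda>z. x + z) has_derivative (\<lambda>h. h)) (at z)" by (intro derivative_eq_intros) auto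
        show ?thesis using has_derivative_compose[OF l d1] by simp
      qed
      have h3: "(blinfun_apply (f'' x b) has_derivative blinfun_apply (f'' x b)) (at z)"
        by (rule bounded_linear_imp_has_derivative) (rule blinfun.bounded_linear_right)
      show ?thesis unfolding \<psi>_def
        by (rule has_derivative_at_withinI)
           (use has_derivative_diff[OF has_derivative_diff[OF h1 h2] h3] in \<open>simp add: minus_blinfun.rep_eq fun_diff_def\<close>)
    qed
    have "norm (\<psi> a - \<psi> 0) \<le> (norm b * e) * norm (a - 0)"
    proof (rule differentiable_bound[OF convex_ball der])
      fix z assume "z \<in> ball (0::'a) (d - norm b)"
      then have "norm z + norm b < d" by simp
      then show "onorm (blinfun_apply (f' (x+z+b) - f' (x+z) - f'' x b)) \<le> norm b * e"
        using step1 by (simp add: norm_blinfun.rep_eq[symmetric])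
    next
      show "a \<in> ball 0 (d - norm b)" using ab by simp
    next
      have "d - norm b > 0" using ab norm_ge_zero[of a] by linarith
      then show "(0::'a) \<in> ball 0 (d - norm b)" by simp
    qed
    then show "\<bar>f (x+a+b) - f (x+a) - f (x+b) + f x - f'' x b a\<bar> \<le> e * norm a * norm b"
      by (simp add: \<psi>_def blinfun.zero_right algebra_simps)
  qed
qed

lemma schwarz:
  fixes f :: "'a::real_normed_vector \<Rightarrow> real" and f' :: "'a \<Rightarrow> 'a \<Rightarrow>\<^sub>L real"
    and f'' :: "'a \<Rightarrow> 'a \<Rightarrow>\<^sub>L ('a \<Rightarrow>\<^sub>L real)"
  assumes d1: "\<And>y. (f has_derivative blinfun_apply (f' y)) (at y)"
    and d2: "\<And>y. (f' has_derivative blinfun_apply (f'' y)) (at y)"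
    and c: "isCont f'' x"
  shows "f'' x h k = f'' x k h"
proof (rule ccontr)
  define D where "D = f'' x k h - f'' x h k"
  assume "f'' x h k \<noteq> f'' x k h"
  then have Dp: "\<bar>D\<bar> > 0" by (simp add: D_def)
  define N where "N = norm h * norm k"
  have N0: "N \<ge> 0" by (simp add: N_def)
  define e where "e = \<bar>D\<bar> / (4 * (N + 1))"
  have e: "e > 0" using Dp N0 by (simp add: e_def)
  obtain d where d: "d > 0" and dd: "\<And>a b. norm a + norm b < d \<Longrightarrow>
     \<bar>f (x+a+b) - f (x+a) - f (x+b) + f x - f'' x b a\<bar> \<le> e * norm a * norm b"
    using schwarz_core[OF d1 d2 c e] by blast
  define s where "s = d / (2 * (norm h + norm k + 1))"
  have s: "s > 0" using d by (simp add: s_def add_nonneg_pos)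
  have "s * (norm h + norm k) < d"
  proof -
    have "s * (norm h + norm k) \<le> s * (norm h + norm k + 1)" using s by simp
    also have "\<dots> = d / 2"
    proof -
      have X: "norm h + norm k + 1 > 0" by (simp add: add_nonneg_pos)
      have "\<And>X. X > 0 \<Longrightarrow> d / (2 * X) * X = d / 2" by (simp add: field_simps)
      from this[OF X] show ?thesis by (simp add: s_def)
    qed
    finally show ?thesis using d by linarith
  qed
  then have sm: "norm (s *\<^sub>R h) + norm (s *\<^sub>R k) < d" using s by (simp add: algebra_simps)
  have i1: "\<bar>f (x+s *\<^sub>R h+s *\<^sub>R k) - f (x+s *\<^sub>R h) - f (x+s *\<^sub>R k) + f x - s * s * f'' x k h\<bar> \<le> e * (s * s * N)"
    using dd[OF sm] s by (simp add: N_def blinfun.scaleR_left blinfun.scaleR_right mult_ac)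
  have i2: "\<bar>f (x+s *\<^sub>R k+s *\<^sub>R h) - f (x+s *\<^sub>R k) - f (x+s *\<^sub>R h) + f x - s * s * f'' x h k\<bar> \<le> e * (s * s * N)"
    using dd[of "s *\<^sub>R k" "s *\<^sub>R h"] sm s by (simp add: N_def blinfun.scaleR_left blinfun.scaleR_right mult_ac)
  have "x+s *\<^sub>R k+s *\<^sub>R h = x+s *\<^sub>R h+s *\<^sub>R k" by (simp add: algebra_simps)
  then have "\<bar>s * s * D\<bar> \<le> 2 * e * (s * s * N)" using i1 i2 by (simp add: D_def algebra_simps)
  then have "s * s * \<bar>D\<bar> \<le> s * s * (2 * e * N)" using s by (simp add: abs_mult mult_ac)
  then have "\<bar>D\<bar> \<le> 2 * e * N" using s by simp
  also have "2 * e * N = \<bar>D\<bar> * (N / (2 * (N + 1)))" using N0 by (simp add: e_def field_simps)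
  also have "\<dots> < \<bar>D\<bar>"
  proof -
    have "N / (2 * (N + 1)) < 1" using N0 by (simp add: field_simps)
    then show ?thesis using Dp mult_strict_left_mono[of "N / (2 * (N + 1))" 1 "\<bar>D\<bar>"] by simp
  qed
  finally show False by simp
qed


lemma lin_expand:
  fixes g :: "real^'n \<Rightarrow> real"
  assumes "bounded_linear g"
  shows "g h = (\<Sum>i\<in>UNIV. h $ i * g (axis i 1))"
proof -
  interpret bounded_linear g by fact
  have "g h = g (\<Sum>i\<in>UNIV. h $ i *\<^sub>R axis i 1)"
    using basis_expansion[of h] by (simp add: scalar_mult_eq_scaleR)
  also have "\<dots> = (\<Sum>i\<in>UNIV. h $ i * g (axis i 1))" by (simp add: sum scaleR)
  finally show ?thesis .
qed

lemma hvd_vec: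
  fixes f :: "real \<Rightarrow> real^'n"
  assumes "\<And>i. ((\<lambda>s. f s $ i) has_vector_derivative D $ i) (at t)"
  shows "(f has_vector_derivative D) (at t)"
  unfolding has_vector_derivative_def
proof (subst has_derivative_componentwise_within, intro ballI)
  fix b :: "real^'n" assume "b \<in> Basis"
  then obtain i where b: "b = axis i 1" by (auto simp: Basis_vec_def)
  show "((\<lambda>x. f x \<bullet> b) has_derivative (\<lambda>x. x *\<^sub>R D \<bullet> b)) (at t within UNIV)"
    using assms[of i] by (simp add: b inner_axis has_vector_derivative_def)
qed

lemma deriv_dir:
  fixes f :: "'a::real_normed_vector \<Rightarrow> real"
  assumes "(f has_derivative A) (at x)"
  shows "deriv (\<lambda>t. f (x + t *\<^sub>R h)) 0 = A h"
proof -
  have l: "((\<lambda>t. x + t *\<^sub>R h) has_derivative (\<lambda>t. t *\<^sub>R h)) (at 0)"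
    by (auto intro!: derivative_eq_intros)
  have c: "((\<lambda>t. f (x + t *\<^sub>R h)) has_derivative (\<lambda>t. A (t *\<^sub>R h))) (at 0)"
    using has_derivative_compose[OF l] assms by simp
  interpret bounded_linear A using assms by (rule has_derivative_bounded_linear)
  have "(\<lambda>t. A (t *\<^sub>R h)) = (*) (A h)" by (auto simp: fun_eq_iff scaleR)
  then have "((\<lambda>t. f (x + t *\<^sub>R h)) has_field_derivative A h) (at 0)"
    using c by (simp add: has_field_derivative_def)
  then show ?thesis by (rule DERIV_imp_deriv)
qed

locale lagr =
  fixes L :: "real^'n \<Rightarrow> real^'n \<Rightarrow> real"
    and F' :: "(real^'n) \<times> (real^'n) \<Rightarrow> ((real^'n) \<times> (real^'n)) \<Rightarrow>\<^sub>L real"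
    and F'' :: "(real^'n) \<times> (real^'n) \<Rightarrow> ((real^'n) \<times> (real^'n)) \<Rightarrow>\<^sub>L (((real^'n) \<times> (real^'n)) \<Rightarrow>\<^sub>L real)"
  assumes d1: "\<And>y. ((\<lambda>(q, v). L q v) has_derivative blinfun_apply (F' y)) (at y)"
    and d2: "\<And>y. (F' has_derivative blinfun_apply (F'' y)) (at y)"
    and cont: "\<And>y. isCont F'' y"
begin

lemma sym: "F'' p a b = F'' p b a"
  by (rule schwarz[OF d1 d2 cont])

lemma pq_eq: "pq L q v $ i = F' (q, v) (axis i 1, 0)"
proof -
  have "pq L q v $ i = deriv (\<lambda>t. (\<lambda>(q, v). L q v) ((q, v) + t *\<^sub>R (axis i 1, 0))) 0"
    by (simp add: pq_def)
  also have "\<dots> = F' (q, v) (axis i 1, 0)" by (rule deriv_dir[OF d1])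
  finally show ?thesis .
qed

lemma pv_eq: "pv L q v $ i = F' (q, v) (0, axis i 1)"
proof -
  have "pv L q v $ i = deriv (\<lambda>t. (\<lambda>(q, v). L q v) ((q, v) + t *\<^sub>R (0, axis i 1))) 0"
    by (simp add: pv_def)
  also have "\<dots> = F' (q, v) (0, axis i 1)" by (rule deriv_dir[OF d1])
  finally show ?thesis .
qed

lemma dF'_apply: "((\<lambda>p. F' p y) has_derivative (\<lambda>h. F'' p h y)) (at p)"
  using blinfun.bounded_linear_left[THEN bounded_linear.has_derivative, OF d2[of p], of y] .

lemma d2vv_eq: "d2vv L q v $ i $ j = F'' (q, v) (0, axis j 1) (0, axis i 1)"
proof -
  have "d2vv L q v $ i $ j = deriv (\<lambda>t. (\<lambda>p. F' p (0, axis i 1)) ((q, v) + t *\<^sub>R (0, axis j 1))) 0"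
    by (simp add: d2vv_def pv_eq)
  also have "\<dots> = F'' (q, v) (0, axis j 1) (0, axis i 1)" by (rule deriv_dir[OF dF'_apply])
  finally show ?thesis .
qed

lemma d2qv_eq: "d2qv L q v $ i $ j = F'' (q, v) (0, axis j 1) (axis i 1, 0)"
proof -
  have "d2qv L q v $ i $ j = deriv (\<lambda>t. (\<lambda>p. F' p (axis i 1, 0)) ((q, v) + t *\<^sub>R (0, axis j 1))) 0"
    by (simp add: d2qv_def pq_eq)
  also have "\<dots> = F'' (q, v) (0, axis j 1) (axis i 1, 0)" by (rule deriv_dir[OF dF'_apply])
  finally show ?thesis .
qed

lemma expQ: fixes B :: "((real^'n) \<times> (real^'n)) \<Rightarrow>\<^sub>L real"
  shows "B (h, 0) = (\<Sum>i\<in>UNIV. h $ i * B (axis i 1, 0))"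
  by (rule lin_expand) (intro bounded_linear_intros)

lemma expV: fixes B :: "((real^'n) \<times> (real^'n)) \<Rightarrow>\<^sub>L real"
  shows "B (0, h) = (\<Sum>i\<in>UNIV. h $ i * B (0, axis i 1))"
  by (rule lin_expand) (intro bounded_linear_intros)

lemma expQ2: "F'' p (h, 0) y = (\<Sum>i\<in>UNIV. h $ i * F'' p (axis i 1, 0) y)"
  by (rule lin_expand) (intro bounded_linear_intros)

lemma expV2: "F'' p (0, h) y = (\<Sum>i\<in>UNIV. h $ i * F'' p (0, axis i 1) y)"
  by (rule lin_expand) (intro bounded_linear_intros)

end

lemma xq_xvec[simp]: "xq (xvec q v l) = q" by (simp add: xq_def xvec_def)
lemma xv_xvec[simp]: "xv (xvec q v l) = v" by (simp add: xv_def xvec_def)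
lemma xl_xvec[simp]: "xl (xvec q v l) = l" by (simp add: xl_def xvec_def)

lemma xvec_nth: "xvec q v l $ Inl a = q $ a" "xvec q v l $ Inr (Inl a) = v $ a" "xvec q v l $ Inr (Inr c) = l $ c"
  by (simp_all add: xvec_def)

lemma sum_UNIV_plus:
  "(\<Sum>i\<in>(UNIV::('a::finite + 'b::finite) set). f i) = (\<Sum>a\<in>UNIV. f (Inl a)) + (\<Sum>b\<in>UNIV. f (Inr b))"
  by (subst UNIV_Plus_UNIV[symmetric], subst sum.Plus) (simp_all add: o_def)

lemma if10_mult: "(if P then 1 else 0) * (y::real) = (if P then y else 0)"
  "(- (if P then 1 else 0)) * (y::real) = (if P then -y else 0)" by simp_all

lemma Emat_mv:
  fixes X :: "real^('n::finite + ('n + 'm::finite))"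
  shows "(Emat L x *v X) $ Inl a = X $ Inl a"
    "(Emat L x *v X) $ Inr (Inl a) = (d2vv L (xq x) (xv x) *v xv X) $ a"
    "(Emat L x *v X) $ Inr (Inr c) = 0"
  by (simp_all add: matrix_vector_mult_def Emat_def sum_UNIV_plus xv_def if10_mult)

lemma Jmat_mv:
  fixes Z :: "real^('n::finite + ('n + 'm::finite))"
  shows "(Jmat L g x *v Z) $ Inl a = xv Z $ a"
    "(Jmat L g x *v Z) $ Inr (Inl a) = - xq Z $ a + ((d2qv L (xq x) (xv x) - transpose (d2qv L (xq x) (xv x))) *v xv Z) $ a
        - (transpose (jac g (xq x)) *v xl Z) $ a"
    "(Jmat L g x *v Z) $ Inr (Inr c) = (jac g (xq x) *v xv Z) $ c"
  by (simp_all add: matrix_vector_mult_def Jmat_def Let_def sum_UNIV_plus xv_def xq_def xl_def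
      if10_mult sum_negf)

lemma Bmat_mv:
  fixes x :: "real^('n::finite + ('n + 'm::finite))"
  shows "(Bmat Bt x *v u) $ Inl a = 0"
    "(Bmat Bt x *v u) $ Inr (Inl a) = (Bt (xq x) (xv x) *v u) $ a"
    "(Bmat Bt x *v u) $ Inr (Inr c) = 0"
  by (simp_all add: matrix_vector_mult_def Bmat_def)

lemma zvec_comp:
  "xq (zvec L x) = - pq L (xq x) (xv x) + d2qv L (xq x) (xv x) *v xv x"
  "xv (zvec L x) = xv x" "xl (zvec L x) = xl x"
  by (simp_all add: zvec_def Let_def xq_def xv_def xl_def vec_eq_iff)

lemma vec_sum_eq:
  fixes X Y :: "real^('n::finite + ('n + 'm::finite))"
  shows "X = Y \<longleftrightarrow> (\<forall>a. X $ Inl a = Y $ Inl a) \<and> (\<forall>a. X $ Inr (Inl a) = Y $ Inr (Inl a)) \<and> (\<forall>c. X $ Inr (Inr c) = Y $ Inr (Inr c))"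
  by (metis sum.exhaust vec_eq_iff)

lemma inner_sum3:
  fixes X Y :: "real^('n::finite + ('n + 'm::finite))"
  shows "X \<bullet> Y = xq X \<bullet> xq Y + xv X \<bullet> xv Y + xl X \<bullet> xl Y"
  by (simp add: inner_vec_def sum_UNIV_plus xq_def xv_def xl_def)

lemma sum_cases3: "(\<forall>i::'a + ('b + 'c). P i) \<longleftrightarrow> (\<forall>a. P (Inl a)) \<and> (\<forall>a. P (Inr (Inl a))) \<and> (\<forall>c. P (Inr (Inr c)))"
  by (metis sum.exhaust)

lemma J_skew: "transpose (Jmat L g x) = - Jmat L g x"
  by (simp add: vec_eq_iff transpose_def Jmat_def Let_def sum_cases3)

lemma B_out: "transpose (Bmat Bt x) *v zvec L x = transpose (Bt (xq x) (xv x)) *v xv x"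
  by (simp add: vec_eq_iff transpose_def Bmat_def matrix_vector_mult_def sum_UNIV_plus zvec_def Let_def xv_def)

context lagr begin

lemma d2vv_sym: "d2vv L q v $ i $ j = d2vv L q v $ j $ i"
  by (simp add: d2vv_eq sym)

lemma E_sym: "transpose (Emat L x) = Emat L x"
  by (simp add: vec_eq_iff transpose_def Emat_def sum_cases3 d2vv_sym)

end

lemma bl_xq: "bounded_linear (xq :: real^('n::finite + ('n + 'm::finite)) \<Rightarrow> real^'n)"
  by (simp add: linear_conv_bounded_linear[symmetric] linear_iff xq_def vec_eq_iff)
lemma bl_xv: "bounded_linear (xv :: real^('n::finite + ('n + 'm::finite)) \<Rightarrow> real^'n)"
  by (simp add: linear_conv_bounded_linear[symmetric] linear_iff xv_def vec_eq_iff)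

context lagr begin

lemma d2qv_eq': "d2qv L q v $ i $ j = F'' (q, v) (axis i 1, 0) (0, axis j 1)"
  by (simp add: d2qv_eq sym)

lemma pv_inner: "pv L q v \<bullet> w = F' (q, v) (0, w)"
  by (simp add: inner_vec_def pv_eq expV[of _ w] mult_ac)

lemma pq_inner: "pq L q v \<bullet> w = F' (q, v) (w, 0)"
  by (simp add: inner_vec_def pq_eq expQ[of _ w] mult_ac)

lemma Sv_inner: "(d2qv L q v *v w) \<bullet> h = F'' (q, v) (h, 0) (0, w)"
proof -
  have "F'' (q, v) (h, 0) (0, w) = (\<Sum>a\<in>UNIV. h $ a * F'' (q, v) (axis a 1, 0) (0, w))" by (rule expQ2)
  also have "\<dots> = (\<Sum>a\<in>UNIV. h $ a * (\<Sum>b\<in>UNIV. w $ b * F'' (q, v) (axis a 1, 0) (0, axis b 1)))"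
    by (simp only: expV[of "F'' (q, v) (axis _ 1, 0)" w])
  also have "\<dots> = (d2qv L q v *v w) \<bullet> h"
    by (simp add: inner_vec_def matrix_vector_mult_def d2qv_eq' sum_distrib_left sum_distrib_right mult_ac)
  finally show ?thesis by simp
qed

lemma Wv_inner: "(transpose (d2vv L q v) *v w) \<bullet> h = F'' (q, v) (0, h) (0, w)"
proof -
  have "F'' (q, v) (0, h) (0, w) = (\<Sum>a\<in>UNIV. h $ a * F'' (q, v) (0, axis a 1) (0, w))" by (rule expV2)
  also have "\<dots> = (\<Sum>a\<in>UNIV. h $ a * (\<Sum>b\<in>UNIV. w $ b * F'' (q, v) (0, axis a 1) (0, axis b 1)))"
    by (simp only: expV[of "F'' (q, v) (0, axis _ 1)" w])
  also have "\<dots> = (transpose (d2vv L q v) *v w) \<bullet> h"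
    by (simp add: inner_vec_def matrix_vector_mult_def transpose_def d2vv_eq sum_distrib_left sum_distrib_right mult_ac)
  finally show ?thesis by simp
qed

lemma Wv_inner': "(d2vv L q v *v w) \<bullet> h = F'' (q, v) (0, h) (0, w)"
proof -
  have "transpose (d2vv L q v) = d2vv L q v" by (simp add: vec_eq_iff transpose_def d2vv_sym)
  then show ?thesis using Wv_inner[of q v w h] by (simp del: transpose_matrix_vector)
qed

lemma Ham_eq: "Ham L x = F' (xq x, xv x) (0, xv x) - (\<lambda>(q, v). L q v) (xq x, xv x)"
  by (simp add: Ham_def pv_inner)

lemma Ham_deriv:
  fixes x :: "real^('n + ('n + 'm::finite))"
  shows "(Ham L has_derivative (\<lambda>h. (transpose (Emat L x) *v zvec L x) \<bullet> h)) (at x)"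
proof -
  define P where "P = (\<lambda>x::real^('n + ('n + 'm)). (xq x, xv x))"
  have blP: "bounded_linear P" unfolding P_def by (intro bounded_linear_Pair bl_xq bl_xv)
  have dP: "(P has_derivative P) (at x)" by (rule bounded_linear.has_derivative[OF blP has_derivative_ident])
  have h1: "((\<lambda>x. F' (P x)) has_derivative (\<lambda>h. F'' (P x) (P h))) (at x)"
    using has_derivative_compose[OF dP d2] .
  have h2: "((\<lambda>x. (0::real^'n, xv x)) has_derivative (\<lambda>h. (0, xv h))) (at x)"
    using bl_xv by (auto intro!: derivative_eq_intros bounded_linear.has_derivative[OF bl_xv])
  have h3: "((\<lambda>x. F' (P x) (0, xv x)) has_derivative (\<lambda>h. F' (P x) (0, xv h) + F'' (P x) (P h) (0, xv x))) (at x)"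
    using blinfun.FDERIV[OF h1 h2] .
  have h4: "((\<lambda>x. (\<lambda>(q, v). L q v) (P x)) has_derivative (\<lambda>h. F' (P x) (P h))) (at x)"
    using has_derivative_compose[OF dP d1] .
  note h5 = has_derivative_diff[OF h3 h4]
  have eq: "Ham L = (\<lambda>x. F' (P x) (0, xv x) - (\<lambda>(q, v). L q v) (P x))"
    by (simp add: fun_eq_iff Ham_eq P_def)
  show ?thesis unfolding eq
  proof (rule has_derivative_eq_rhs[OF h5], rule ext)
    fix h
    define p where "p = P x"
    have Ph: "P h = (xq h, 0) + (0, xv h)" by (simp add: P_def)
    have "F' p (0, xv h) + F'' p (P h) (0, xv x) - F' p (P h)
        = F'' p (xq h, 0) (0, xv x) + F'' p (0, xv h) (0, xv x) - F' p (xq h, 0)"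
    proof -
      have a1: "F' p (P h) = F' p (xq h, 0) + F' p (0, xv h)" by (simp only: Ph blinfun.add_right)
      have a2: "F'' p (P h) = F'' p (xq h, 0) + F'' p (0, xv h)" by (simp only: Ph blinfun.add_right)
      show ?thesis by (simp only: a1 a2 blinfun.add_left diff_add_eq add_diff_cancel_right add_diff_add)
    qed
    also have "\<dots> = (transpose (Emat L x) *v zvec L x) \<bullet> h"
      unfolding E_sym inner_sum3
      by (simp add: p_def P_def xq_def[of "Emat L x *v zvec L x"] xv_def[of "Emat L x *v zvec L x"]
          xl_def[of "Emat L x *v zvec L x"] Emat_mv zvec_comp inner_add_left
          inner_diff_left Sv_inner pq_inner Wv_inner'
          flip: xq_def xv_def xl_def zero_vec_def)
    finally show "F' (P x) (0, xv h) + F'' (P x) (P h) (0, xv x) - F' (P x) (P h) = (transpose (Emat L x) *v zvec L x) \<bullet> h"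
      by (simp add: p_def)
  qed
qed

end

lemma pointwise_equiv:
  fixes q v q' v' :: "real^'n::finite" and l l' :: "real^'m::finite"
  shows "(q' = v \<and> transpose (d2qv L q v) *v q' + d2vv L q v *v v'
            = pq L q v - transpose (jac g q) *v l + Bt q v *v u \<and> jac g q *v v = 0)
     \<longleftrightarrow> Emat L (xvec q v l) *v xvec q' v' l'
          = Jmat L g (xvec q v l) *v zvec L (xvec q v l) + Bmat Bt (xvec q v l) *v u"
proof (cases "q' = v")
  case True
  show ?thesis unfolding True vec_sum_eq
    by (auto simp: xvec_nth Emat_mv Jmat_mv Bmat_mv zvec_comp vec_eq_iff matrix_vector_mult_diff_rdistrib
      algebra_simps simp del: transpose_matrix_vector)
next
  case False
  then obtain a where a: "q' $ a \<noteq> v $ a" by (auto simp: vec_eq_iff)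
  have "Emat L (xvec q v l) *v xvec q' v' l' \<noteq> Jmat L g (xvec q v l) *v zvec L (xvec q v l) + Bmat Bt (xvec q v l) *v u"
  proof
    assume "Emat L (xvec q v l) *v xvec q' v' l' = Jmat L g (xvec q v l) *v zvec L (xvec q v l) + Bmat Bt (xvec q v l) *v u"
    then have "(Emat L (xvec q v l) *v xvec q' v' l') $ Inl a = (Jmat L g (xvec q v l) *v zvec L (xvec q v l) + Bmat Bt (xvec q v l) *v u) $ Inl a"
      by simp
    then show False using a by (simp add: xvec_nth Emat_mv Jmat_mv Bmat_mv zvec_comp)
  qed
  then show ?thesis using False by simp
qed

lemma transpose_inner: "(transpose A *v z) \<bullet> y = z \<bullet> (A *v (y::real^'a::finite))"
  by (simp add: dot_lmul_matrix)

lemma skew_zero: assumes "transpose A = - A" shows "z \<bullet> (A *v (z::real^'a::finite)) = 0"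
proof -
  have "z \<bullet> (A *v z) = (transpose A *v z) \<bullet> z" by (simp only: transpose_inner)
  also have "\<dots> = ((- A) *v z) \<bullet> z" by (simp only: assms)
  also have "((- A) *v z) = - (A *v z)" by (simp add: vec_eq_iff matrix_vector_mult_def sum_negf)
  also have "(- (A *v z)) \<bullet> z = - (z \<bullet> (A *v z))" by (simp add: inner_commute)
  finally show ?thesis by simp
qed

context lagr begin

lemma traj_at:
  assumes hq: "(q has_vector_derivative q') (at t)" and hv: "(v has_vector_derivative v') (at t)"
    and hl: "(lam has_vector_derivative l') (at t)"
  shows "((\<lambda>s. xvec (q s) (v s) (lam s)) has_vector_derivative xvec q' v' l') (at t)"
    and "((\<lambda>s. pv L (q s) (v s)) has_vector_derivative
           (transpose (d2qv L (q t) (v t)) *v q' + d2vv L (q t) (v t) *v v')) (at t)"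
proof -
  show "((\<lambda>s. xvec (q s) (v s) (lam s)) has_vector_derivative xvec q' v' l') (at t)"
  proof (rule hvd_vec)
    fix i
    show "((\<lambda>s. xvec (q s) (v s) (lam s) $ i) has_vector_derivative xvec q' v' l' $ i) (at t)"
    proof (cases i)
      case (Inl a)
      then show ?thesis using bounded_linear.has_vector_derivative[OF bounded_linear_vec_nth hq, of a]
        by (simp add: xvec_def)
    next
      case (Inr b)
      then show ?thesis
      proof (cases b)
        case (Inl a)
        then show ?thesis using \<open>i = Inr b\<close> bounded_linear.has_vector_derivative[OF bounded_linear_vec_nth hv, of a]
          by (simp add: xvec_def)
      next
        case (Inr c)
        then show ?thesis using \<open>i = Inr b\<close> bounded_linear.has_vector_derivative[OF bounded_linear_vec_nth hl, of c]
          by (simp add: xvec_def)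
      qed
    qed
  qed
  show "((\<lambda>s. pv L (q s) (v s)) has_vector_derivative
           (transpose (d2qv L (q t) (v t)) *v q' + d2vv L (q t) (v t) *v v')) (at t)"
  proof (rule hvd_vec)
    fix i :: 'n
    define p where "p = (q t, v t)"
    have hp: "((\<lambda>s. (q s, v s)) has_derivative (\<lambda>h. h *\<^sub>R (q', v'))) (at t)"
      using has_vector_derivative_Pair[OF hq hv] by (simp add: has_vector_derivative_def)
    have c1: "((\<lambda>s. F' (q s, v s)) has_derivative (\<lambda>h. F'' p (h *\<^sub>R (q', v')))) (at t)"
      using has_derivative_compose[OF hp d2] by (simp add: p_def)
    have c2: "((\<lambda>s. F' (q s, v s) (0, axis i 1)) has_derivative (\<lambda>h. F'' p (h *\<^sub>R (q', v')) (0, axis i 1))) (at t)"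
      using bounded_linear.has_derivative[OF blinfun.bounded_linear_left c1] .
    have val: "F'' p (q', v') (0, axis i 1) = (transpose (d2qv L (q t) (v t)) *v q' + d2vv L (q t) (v t) *v v') $ i"
    proof -
      have "(q', v') = (q', 0) + (0, v')" by simp
      then have "F'' p (q', v') (0, axis i 1) = F'' p (q', 0) (0, axis i 1) + F'' p (0, v') (0, axis i 1)"
        by (metis blinfun.add_left blinfun.add_right)
      also have "\<dots> = (\<Sum>j\<in>UNIV. q' $ j * F'' p (axis j 1, 0) (0, axis i 1)) + (\<Sum>j\<in>UNIV. v' $ j * F'' p (0, axis j 1) (0, axis i 1))"
        by (simp only: expQ2[of p q'] expV2[of p v'])
      also have "\<dots> = (transpose (d2qv L (q t) (v t)) *v q' + d2vv L (q t) (v t) *v v') $ i"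
        by (simp add: matrix_vector_mult_def transpose_def d2qv_eq' d2vv_eq p_def mult_ac del: transpose_matrix_vector)
      finally show ?thesis .
    qed
    show "((\<lambda>s. pv L (q s) (v s) $ i) has_vector_derivative
           (transpose (d2qv L (q t) (v t)) *v q' + d2vv L (q t) (v t) *v v') $ i) (at t)"
    proof -
      have sc: "(\<lambda>h. F'' p (h *\<^sub>R (q', v')) (0, axis i 1)) = (\<lambda>h. h *\<^sub>R ((transpose (d2qv L (q t) (v t)) *v q' + d2vv L (q t) (v t) *v v') $ i))"
        by (rule ext) (simp only: blinfun.scaleR_right blinfun.scaleR_left val)
      show ?thesis using c2 unfolding sc by (simp only: pv_eq has_vector_derivative_def)
    qed
  qed
qed

end

lemma hvd_at_open:
  assumes "open T" "f differentiable_on T" "t \<in> T"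
  shows "(f has_vector_derivative vector_derivative f (at t)) (at t)"
proof -
  have "f differentiable (at t within T)" using assms(2,3) by (simp add: differentiable_on_def)
  then have "f differentiable (at t)" using at_within_open[OF assms(3,1)] by simp
  then show ?thesis by (simp add: vector_derivative_works[symmetric])
qed

theorem mainTheorem1:
  fixes L :: "real^'n \<Rightarrow> real^'n \<Rightarrow> real"
    and g :: "real^'n \<Rightarrow> real^'m"
    and Bt :: "real^'n \<Rightarrow> real^'n \<Rightarrow> real^'p^'n"
  assumes L_C2: "C2 (\<lambda>(q, v). L q v)"
    and g_C1: "C1 g"
  shows
    "(\<forall>(T::real set) (q::real \<Rightarrow> real^'n) (v::real \<Rightarrow> real^'n) (lam::real \<Rightarrow> real^'m) (u::real \<Rightarrow> real^'p).
        open T \<longrightarrow> q differentiable_on T \<longrightarrow> v differentiable_on T \<longrightarrow> lam differentiable_on T \<longrightarrow>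
        ((\<forall>t\<in>T. vector_derivative q (at t) = v t
             \<and> vector_derivative (\<lambda>s. pv L (q s) (v s)) (at t)
                 = pq L (q t) (v t) - transpose (jac g (q t)) *v lam t + Bt (q t) (v t) *v u t
             \<and> jac g (q t) *v v t = 0)
         \<longleftrightarrow>
         (\<forall>t\<in>T. Emat L (xvec (q t) (v t) (lam t)) *v vector_derivative (\<lambda>s. xvec (q s) (v s) (lam s)) (at t)
             = Jmat L g (xvec (q t) (v t) (lam t)) *v zvec L (xvec (q t) (v t) (lam t))
               + Bmat Bt (xvec (q t) (v t) (lam t)) *v u t)))
   \<and> (\<forall>x::real^('n + ('n + 'm)). transpose (Emat L x) = Emat L x)
   \<and> (\<forall>x::real^('n + ('n + 'm)). transpose (Jmat L g x) = - Jmat L g x)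
   \<and> (\<forall>x::real^('n + ('n + 'm)). (Ham L has_derivative (\<lambda>h. (transpose (Emat L x) *v zvec L x) \<bullet> h)) (at x))
   \<and> (\<forall>x::real^('n + ('n + 'm)). transpose (Bmat Bt x) *v zvec L x = transpose (Bt (xq x) (xv x)) *v xv x)
   \<and> (\<forall>(T::real set) (q::real \<Rightarrow> real^'n) (v::real \<Rightarrow> real^'n) (lam::real \<Rightarrow> real^'m) (u::real \<Rightarrow> real^'p).
        open T \<longrightarrow> q differentiable_on T \<longrightarrow> v differentiable_on T \<longrightarrow> lam differentiable_on T \<longrightarrow>
        (\<forall>t\<in>T. Emat L (xvec (q t) (v t) (lam t)) *v vector_derivative (\<lambda>s. xvec (q s) (v s) (lam s)) (at t)
             = Jmat L g (xvec (q t) (v t) (lam t)) *v zvec L (xvec (q t) (v t) (lam t))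
               + Bmat Bt (xvec (q t) (v t) (lam t)) *v u t) \<longrightarrow>
        (\<forall>t\<in>T. ((\<lambda>s. Ham L (xvec (q s) (v s) (lam s))) has_real_derivative
                   (u t \<bullet> (transpose (Bt (q t) (v t)) *v v t))) (at t)))"
proof -
  obtain F' where dF: "\<And>x. ((\<lambda>(q, v). L q v) has_derivative blinfun_apply (F' x)) (at x)" and c1: "C1 F'"
    using L_C2 unfolding C2_def by blast
  obtain F'' where dF': "\<And>x. (F' has_derivative blinfun_apply (F'' x)) (at x)" and c2: "continuous_on UNIV F''"
    using c1 unfolding C1_def by blast
  interpret lagr L F' F''
  proof
    show "\<And>y. isCont F'' y" using c2 continuous_on_eq_continuous_at[OF open_UNIV] by blast
  qed (use dF dF' in auto)
  have P1: "(\<forall>t\<in>T. vector_derivative q (at t) = v t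
             \<and> vector_derivative (\<lambda>s. pv L (q s) (v s)) (at t)
                 = pq L (q t) (v t) - transpose (jac g (q t)) *v lam t + Bt (q t) (v t) *v u t
             \<and> jac g (q t) *v v t = 0)
         \<longleftrightarrow>
         (\<forall>t\<in>T. Emat L (xvec (q t) (v t) (lam t)) *v vector_derivative (\<lambda>s. xvec (q s) (v s) (lam s)) (at t)
             = Jmat L g (xvec (q t) (v t) (lam t)) *v zvec L (xvec (q t) (v t) (lam t))
               + Bmat Bt (xvec (q t) (v t) (lam t)) *v u t)"
    if T: "open T" and dq: "q differentiable_on T" and dv: "v differentiable_on T"
      and dl: "lam differentiable_on T"
    for T :: "real set" and q :: "real \<Rightarrow> real^'n" and v :: "real \<Rightarrow> real^'n"
      and lam :: "real \<Rightarrow> real^'m" and u :: "real \<Rightarrow> real^'p"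
  proof (rule ball_cong[OF refl])
    fix t assume t: "t \<in> T"
    note hq = hvd_at_open[OF T dq t] and hv = hvd_at_open[OF T dv t] and hl = hvd_at_open[OF T dl t]
    have e1: "vector_derivative (\<lambda>s. xvec (q s) (v s) (lam s)) (at t)
        = xvec (vector_derivative q (at t)) (vector_derivative v (at t)) (vector_derivative lam (at t))"
      by (rule vector_derivative_at[OF traj_at(1)[OF hq hv hl]])
    have e2: "vector_derivative (\<lambda>s. pv L (q s) (v s)) (at t)
        = transpose (d2qv L (q t) (v t)) *v vector_derivative q (at t) + d2vv L (q t) (v t) *v vector_derivative v (at t)"
      by (rule vector_derivative_at[OF traj_at(2)[OF hq hv hl]])
    show "(vector_derivative q (at t) = v t
             \<and> vector_derivative (\<lambda>s. pv L (q s) (v s)) (at t)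
                 = pq L (q t) (v t) - transpose (jac g (q t)) *v lam t + Bt (q t) (v t) *v u t
             \<and> jac g (q t) *v v t = 0)
         \<longleftrightarrow> (Emat L (xvec (q t) (v t) (lam t)) *v vector_derivative (\<lambda>s. xvec (q s) (v s) (lam s)) (at t)
             = Jmat L g (xvec (q t) (v t) (lam t)) *v zvec L (xvec (q t) (v t) (lam t))
               + Bmat Bt (xvec (q t) (v t) (lam t)) *v u t)"
      unfolding e1 e2 by (rule pointwise_equiv)
  qed
  have P6: "((\<lambda>s. Ham L (xvec (q s) (v s) (lam s))) has_real_derivative
                   (u t \<bullet> (transpose (Bt (q t) (v t)) *v v t))) (at t)"
    if T: "open T" and dq: "q differentiable_on T" and dv: "v differentiable_on T"
      and dl: "lam differentiable_on T"
      and eq: "\<forall>t\<in>T. Emat L (xvec (q t) (v t) (lam t)) *v vector_derivative (\<lambda>s. xvec (q s) (v s) (lam s)) (at t)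
             = Jmat L g (xvec (q t) (v t) (lam t)) *v zvec L (xvec (q t) (v t) (lam t))
               + Bmat Bt (xvec (q t) (v t) (lam t)) *v u t"
      and t: "t \<in> T"
    for T :: "real set" and q :: "real \<Rightarrow> real^'n" and v :: "real \<Rightarrow> real^'n"
      and lam :: "real \<Rightarrow> real^'m" and u :: "real \<Rightarrow> real^'p" and t
  proof -
    note hq = hvd_at_open[OF T dq t] and hv = hvd_at_open[OF T dv t] and hl = hvd_at_open[OF T dl t]
    define X where "X = xvec (q t) (v t) (lam t)"
    define X' where "X' = vector_derivative (\<lambda>s. xvec (q s) (v s) (lam s)) (at t)"
    define z where "z = zvec L X"
    have hX: "((\<lambda>s. xvec (q s) (v s) (lam s)) has_vector_derivative X') (at t)"
    proof -
      note h0 = traj_at(1)[OF hq hv hl]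
      have "X' = xvec (vector_derivative q (at t)) (vector_derivative v (at t)) (vector_derivative lam (at t))"
        unfolding X'_def by (rule vector_derivative_at[OF h0])
      then show ?thesis using h0 by simp
    qed
    have EX: "Emat L X *v X' = Jmat L g X *v z + Bmat Bt X *v u t" using eq t by (simp add: X_def X'_def z_def)
    have c: "((\<lambda>s. Ham L (xvec (q s) (v s) (lam s))) has_derivative (\<lambda>h. (transpose (Emat L X) *v z) \<bullet> (h *\<^sub>R X'))) (at t)"
      using has_derivative_compose[OF hX[unfolded has_vector_derivative_def] Ham_deriv[of "xvec (q t) (v t) (lam t)"]]
      by (simp only: X_def z_def)
    have val: "(transpose (Emat L X) *v z) \<bullet> X' = u t \<bullet> (transpose (Bt (q t) (v t)) *v v t)"
    proof -
      have "(transpose (Emat L X) *v z) \<bullet> X' = z \<bullet> (Emat L X *v X')" by (rule transpose_inner)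
      also have "\<dots> = z \<bullet> (Jmat L g X *v z) + z \<bullet> (Bmat Bt X *v u t)" by (simp add: EX inner_add_right)
      also have "z \<bullet> (Jmat L g X *v z) = 0" by (rule skew_zero[OF J_skew])
      also have "z \<bullet> (Bmat Bt X *v u t) = (transpose (Bmat Bt X) *v z) \<bullet> u t" by (rule transpose_inner[symmetric])
      also have "\<dots> = (transpose (Bt (q t) (v t)) *v v t) \<bullet> u t" unfolding z_def B_out by (simp add: X_def)
      finally show ?thesis by (simp add: inner_commute)
    qed
    have "(\<lambda>h. (transpose (Emat L X) *v z) \<bullet> (h *\<^sub>R X')) = (*) (u t \<bullet> (transpose (Bt (q t) (v t)) *v v t))"
      by (rule ext) (simp only: inner_scaleR_right val mult.commute)
    then show ?thesis
      using c by (simp add: has_field_derivative_def)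
  qed
  show ?thesis
  proof (intro conjI allI impI ballI)
    fix T :: "real set" and q :: "real \<Rightarrow> real^'n" and v :: "real \<Rightarrow> real^'n"
      and lam :: "real \<Rightarrow> real^'m" and u :: "real \<Rightarrow> real^'p"
    assume "open T" "q differentiable_on T" "v differentiable_on T" "lam differentiable_on T"
    then show "(\<forall>t\<in>T. vector_derivative q (at t) = v t
             \<and> vector_derivative (\<lambda>s. pv L (q s) (v s)) (at t)
                 = pq L (q t) (v t) - transpose (jac g (q t)) *v lam t + Bt (q t) (v t) *v u t
             \<and> jac g (q t) *v v t = 0)
         \<longleftrightarrow>
         (\<forall>t\<in>T. Emat L (xvec (q t) (v t) (lam t)) *v vector_derivative (\<lambda>s. xvec (q s) (v s) (lam s)) (at t)
             = Jmat L g (xvec (q t) (v t) (lam t)) *v zvec L (xvec (q t) (v t) (lam t))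
               + Bmat Bt (xvec (q t) (v t) (lam t)) *v u t)"
      by (rule P1)
  next
    fix T :: "real set" and q :: "real \<Rightarrow> real^'n" and v :: "real \<Rightarrow> real^'n"
      and lam :: "real \<Rightarrow> real^'m" and u :: "real \<Rightarrow> real^'p" and t
    assume "open T" "q differentiable_on T" "v differentiable_on T" "lam differentiable_on T"
      "\<forall>t\<in>T. Emat L (xvec (q t) (v t) (lam t)) *v vector_derivative (\<lambda>s. xvec (q s) (v s) (lam s)) (at t)
             = Jmat L g (xvec (q t) (v t) (lam t)) *v zvec L (xvec (q t) (v t) (lam t))
               + Bmat Bt (xvec (q t) (v t) (lam t)) *v u t" "t \<in> T"
    then show "((\<lambda>s. Ham L (xvec (q s) (v s) (lam s))) has_real_derivative
                   (u t \<bullet> (transpose (Bt (q t) (v t)) *v v t))) (at t)"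
      by (rule P6)
  qed (rule E_sym J_skew Ham_deriv B_out)+
qed

end
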